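(* Let $V$ be a topological real vector space, $N:V\to\mathbb{R}$ a function, and $\alpha>1$ a real number. The following are equivalent: (1) $N$ is strictly sub-convex and is a Minkowski norm on $V$. (2) $N$ is non-negative, positively homogeneous (i.e. $N(\lambda x)=\lambda N(x)$ for all $x\in V$, $\lambda>0$), continuous, and $N^{\alpha}$ is strictly convex.
   Context: Topological real vector spaces are not assumed Hausdorff. A Minkowski norm on a real vector space $V$ is a function $N:V\to\mathbb{R}$ that is non-negative, satisfies $N(\lambda x)=\lambda N(x)$ for all $x\in V$ and real $\lambda>0$, satisfies $N(x+y)\le N(x)+N(y)$ for all $x,y$, and satisfies $N(x)\neq 0$ for $x\neq 0$. A function $g$ on a convex set is strictly convex if $g((1-t)x+ty)<(1-t)g(x)+tg(y)$ for all distinct $x,y$ and $t\in(0,1)$. For $f:C\to\mathbb{R}$ and $r\in\mathbb{R}$, $S_r(f)=\{x\in C: f(x)\le r\}$. For a subset $S$, $\mathrm{Aff}(S)$ is its affine hull; $\mathrm{ri}(S)$ and $\mathrm{rc}(S)$ are the interior and closure of $S$ in the subspace topology of $\mathrm{Aff}(S)$. $]x,y[=\{(1-t)x+ty: t\in[0,1]\}\setminus\{x,y\}$. A subset $C$ is strictly convex if for any two distinct $x,y\in\mathrm{rc}(C)$ one has $]x,y[\subseteq\mathrm{ri}(C)$. A function $f:C\to\mathbb{R}$ is strictly sub-convex if $S_r(f)$ is strictly convex for every $r\in\mathbb{R}$. *)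

theory Defs
  imports "HOL-Analysis.Analysis"
begin

(* A topological real vector space: the type 'a carries a real vector space structure
   and a topology (not assumed Hausdorff) for which addition and scalar multiplication
   are continuous (product topologies on 'a \<times> 'a and real \<times> 'a). *)
definition tvs :: "('a::{real_vector,topological_space}) itself \<Rightarrow> bool" where
  "tvs _ \<longleftrightarrow>
     continuous_on UNIV (\<lambda>p::'a \<times> 'a. fst p + snd p) \<and>
     continuous_on UNIV (\<lambda>p::real \<times> 'a. fst p *\<^sub>R snd p)"

definition minkowski_norm :: "('a::real_vector \<Rightarrow> real) \<Rightarrow> bool" where
  "minkowski_norm N \<longleftrightarrow>
     (\<forall>x. 0 \<le> N x) \<and>
     (\<forall>x. \<forall>c>0. N (c *\<^sub>R x) = c * N x) \<and>
     (\<forall>x y. N (x + y) \<le> N x + N y) \<and>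
     (\<forall>x. x \<noteq> 0 \<longrightarrow> N x \<noteq> 0)"

definition strict_convex_fun_on :: "'a::real_vector set \<Rightarrow> ('a \<Rightarrow> real) \<Rightarrow> bool" where
  "strict_convex_fun_on C g \<longleftrightarrow>
     (\<forall>x\<in>C. \<forall>y\<in>C. x \<noteq> y \<longrightarrow>
        (\<forall>t. 0 < t \<and> t < 1 \<longrightarrow>
           g ((1 - t) *\<^sub>R x + t *\<^sub>R y) < (1 - t) * g x + t * g y))"

definition rel_closure :: "('a::{real_vector,topological_space}) set \<Rightarrow> 'a set" where
  "rel_closure S = (top_of_set (affine hull S)) closure_of S"

definition strictly_convex_set :: "('a::{real_vector,topological_space}) set \<Rightarrow> bool" where
  "strictly_convex_set C \<longleftrightarrow>
     (\<forall>x\<in>rel_closure C. \<forall>y\<in>rel_closure C. x \<noteq> y \<longrightarrow> open_segment x y \<subseteq> rel_interior C)"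

definition sublevel :: "'a set \<Rightarrow> ('a \<Rightarrow> real) \<Rightarrow> real \<Rightarrow> 'a set" where
  "sublevel C f r = {x\<in>C. f x \<le> r}"

definition strictly_sub_convex :: "('a::{real_vector,topological_space}) set \<Rightarrow> ('a \<Rightarrow> real) \<Rightarrow> bool" where
  "strictly_sub_convex C f \<longleftrightarrow> (\<forall>r. strictly_convex_set (sublevel C f r))"

end

theory Submission imports Defs begin

lemma bern_aux:
  fixes y a :: real
  assumes "y \<ge> 0" "y \<noteq> 1" "a > 1"
  shows "y powr a > 1 + a * (y - 1)"
proof -
  define f where "f = (\<lambda>z::real. z powr a - a * z)"
  have D: "DERIV f z :> a * z powr (a - 1) - a" if "z > 0" for z
    unfolding f_def using that
    by (auto intro!: derivative_eq_intros has_real_derivative_powr)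
  have C: "continuous_on {b..c} f" if "b > 0" for b c
    unfolding f_def using that by (auto intro!: continuous_intros)
  show ?thesis
  proof (cases "y > 1")
    case True
    have "f 1 < f y"
    proof (rule DERIV_pos_imp_increasing_open[OF True])
      fix x assume x: "1 < x" "x < y"
      have "1 powr (a - 1) < x powr (a - 1)"
        using x assms by (intro powr_less_mono2) auto
      then show "\<exists>d. DERIV f x :> d \<and> d > 0" using D[of x] x assms by (intro exI[of _ "a * x powr (a - 1) - a"]) auto
    qed (rule C, simp)
    then show ?thesis unfolding f_def by (simp add: algebra_simps)
  next
    case False
    show ?thesis
    proof (cases "y = 0")
      case True then show ?thesis using assms by simp
    next
      case F2: False
      with False assms have y: "0 < y" "y < 1" by auto
      have "f 1 < f y"
      proof (rule DERIV_neg_imp_decreasing_open[OF y(2)])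
        fix x assume x: "y < x" "x < 1"
        have "x powr (a - 1) < 1 powr (a - 1)"
          using x y assms by (intro powr_less_mono2) auto
        then show "\<exists>d. DERIV f x :> d \<and> d < 0" using D[of x] x y assms by (intro exI[of _ "a * x powr (a - 1) - a"]) auto
      qed (rule C, use y in simp)
      then show ?thesis unfolding f_def by (simp add: algebra_simps)
    qed
  qed
qed

lemma tangent_strict:
  fixes x m a :: real
  assumes "x \<ge> 0" "m > 0" "x \<noteq> m" "a > 1"
  shows "x powr a > m powr a + a * m powr (a - 1) * (x - m)"
proof -
  have "(x/m) powr a > 1 + a * (x/m - 1)"
    using assms by (intro bern_aux) auto
  then have "m powr a * (x/m) powr a > m powr a * (1 + a * (x/m - 1))"
    using assms by (intro mult_strict_left_mono) auto
  moreover have "m powr a * (x/m) powr a = x powr a"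
    using assms by (simp add: powr_divide)
  moreover have "m powr a * (1 + a * (x/m - 1)) = m powr a + a * m powr (a - 1) * (x - m)"
    using assms by (simp add: powr_diff field_simps)
  ultimately show ?thesis by simp
qed

lemma powr_strict_convex:
  fixes x y t a :: real
  assumes "x \<ge> 0" "y \<ge> 0" "x \<noteq> y" "0 < t" "t < 1" "a > 1"
  shows "((1 - t) * x + t * y) powr a < (1 - t) * x powr a + t * y powr a"
proof -
  define m where "m = (1 - t) * x + t * y"
  have "m - x = t * (y - x)" "m - y = (1 - t) * (x - y)" unfolding m_def by (simp_all add: algebra_simps)
  then have mx: "m \<noteq> x" and my: "m \<noteq> y" using assms by auto
  have mpos: "m > 0" unfolding m_def using assms
    by (smt (verit, ccfv_threshold) mult_nonneg_nonneg mult_pos_pos)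
  define c where "c = a * m powr (a - 1)"
  have 1: "x powr a > m powr a + c * (x - m)" unfolding c_def
    using tangent_strict[of x m a] assms mx mpos by auto
  have 2: "y powr a > m powr a + c * (y - m)" unfolding c_def
    using tangent_strict[of y m a] assms my mpos by auto
  have "(1 - t) * x powr a + t * y powr a > (1 - t) * (m powr a + c * (x - m)) + t * (m powr a + c * (y - m))"
    using 1 2 assms by (intro add_strict_mono mult_strict_left_mono) auto
  also have "(1 - t) * (m powr a + c * (x - m)) + t * (m powr a + c * (y - m)) = m powr a"
    unfolding m_def by (simp add: algebra_simps)
  finally show ?thesis unfolding m_def .
qed

lemma tvs_add:
  assumes "tvs TYPE('a::{real_vector,topological_space})"
  shows "continuous_on UNIV (\<lambda>x::'a. x + c)"
proof -
  have "continuous_on UNIV ((\<lambda>p::'a \<times> 'a. fst p + snd p) \<circ> (\<lambda>x. (x, c)))"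
    by (rule continuous_on_compose[OF continuous_on_Pair[OF continuous_on_id continuous_on_const]])
       (rule continuous_on_subset[OF assms[unfolded tvs_def, THEN conjunct1]], simp)
  then show ?thesis by (simp add: o_def)
qed

lemma tvs_scale:
  assumes "tvs TYPE('a::{real_vector,topological_space})"
  shows "continuous_on UNIV (\<lambda>x::'a. c *\<^sub>R x)"
proof -
  have "continuous_on UNIV ((\<lambda>p::real \<times> 'a. fst p *\<^sub>R snd p) \<circ> (\<lambda>x. (c, x)))"
    by (rule continuous_on_compose[OF continuous_on_Pair[OF continuous_on_const continuous_on_id]])
       (rule continuous_on_subset[OF assms[unfolded tvs_def, THEN conjunct2]], simp)
  then show ?thesis by (simp add: o_def)
qed

lemma tvs_ray:
  assumes "tvs TYPE('a::{real_vector,topological_space})"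
  shows "continuous_on UNIV (\<lambda>s::real. s *\<^sub>R (z::'a))"
proof -
  have "continuous_on UNIV ((\<lambda>p::real \<times> 'a. fst p *\<^sub>R snd p) \<circ> (\<lambda>s. (s, z)))"
    by (rule continuous_on_compose[OF continuous_on_Pair[OF continuous_on_id continuous_on_const]])
       (rule continuous_on_subset[OF assms[unfolded tvs_def, THEN conjunct2]], simp)
  then show ?thesis by (simp add: o_def)
qed

lemma homog_zero:
  fixes N :: "'a::real_vector \<Rightarrow> real"
  assumes "\<forall>x. \<forall>c>0. N (c *\<^sub>R x) = c * N x"
  shows "N 0 = 0"
  using assms[rule_format, of 2 0] by simp

lemma aff_hull_sub:
  fixes N :: "'a::{real_vector,topological_space} \<Rightarrow> real"
  assumes nn: "\<forall>x. 0 \<le> N x" and h: "\<forall>x. \<forall>c>0. N (c *\<^sub>R x) = c * N x" and r: "r > 0"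
  shows "affine hull (sublevel UNIV N r) = UNIV"
proof -
  have N0: "N 0 = 0" using homog_zero[OF h] .
  { fix w :: 'a
    have "w \<in> affine hull (sublevel UNIV N r)"
    proof (cases "N w \<le> r")
      case True then show ?thesis by (intro hull_inc) (simp add: sublevel_def)
    next
      case False
      define c where "c = N w / r"
      have c: "c > 1" using False r unfolding c_def by simp
      have "(1/c) *\<^sub>R w \<in> sublevel UNIV N r"
        using h c False r by (simp add: sublevel_def c_def)
      then have 1: "(1/c) *\<^sub>R w \<in> affine hull (sublevel UNIV N r)" by (rule hull_inc)
      have 2: "0 \<in> affine hull (sublevel UNIV N r)" by (intro hull_inc) (simp add: sublevel_def N0 r less_imp_le)
      have "(1 - c) *\<^sub>R 0 + c *\<^sub>R ((1/c) *\<^sub>R w) \<in> affine hull (sublevel UNIV N r)"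
        by (rule mem_affine[OF affine_affine_hull 2 1]) simp
      then show ?thesis using c by simp
    qed }
  then show ?thesis by auto
qed

lemma rel_closure_sup: "S \<subseteq> rel_closure S"
  unfolding rel_closure_def by (rule closure_of_subset) (simp add: hull_subset)

lemma rel_closure_sub: "rel_closure S \<subseteq> affine hull S"
  unfolding rel_closure_def using closure_of_subset_topspace[of "top_of_set (affine hull S)" S] by simp


lemma interior_lt:
  fixes N :: "'a::{real_vector,topological_space} \<Rightarrow> real"
  assumes tv: "tvs TYPE('a)" and nn: "\<forall>x. 0 \<le> N x" and h: "\<forall>x. \<forall>c>0. N (c *\<^sub>R x) = c * N x"
    and r: "r > 0" and z: "z \<in> rel_interior (sublevel UNIV N r)"
  shows "N z < r"
proof -
  obtain T where T: "open T" "z \<in> T" "T \<inter> affine hull (sublevel UNIV N r) \<subseteq> sublevel UNIV N r"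
    and zS: "z \<in> sublevel UNIV N r"
    using z unfolding rel_interior by auto
  have TS: "T \<subseteq> sublevel UNIV N r" using T(3) aff_hull_sub[OF nn h r] by simp
  have zr: "N z \<le> r" using zS by (simp add: sublevel_def)
  show ?thesis
  proof (rule ccontr)
    assume "\<not> N z < r"
    then have eq: "N z = r" using zr by simp
    have P: "open ((\<lambda>s::real. s *\<^sub>R z) -` T)"
      by (rule open_vimage[OF T(1) tvs_ray[OF tv]])
    have "1 \<in> (\<lambda>s::real. s *\<^sub>R z) -` T" using T(2) by simp
    then obtain e where e: "e > 0" "ball 1 e \<subseteq> (\<lambda>s::real. s *\<^sub>R z) -` T"
      using P openE by blast
    have "1 + e/2 \<in> ball 1 e" using e by (simp add: dist_real_def)
    then have "(1 + e/2) *\<^sub>R z \<in> T" using e by auto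
    then have "N ((1 + e/2) *\<^sub>R z) \<le> r" using TS by (auto simp: sublevel_def)
    moreover have "N ((1 + e/2) *\<^sub>R z) = (1 + e/2) * r" using h e eq by simp
    ultimately have "(1 + e/2) * r \<le> r" by simp
    then have "e * r \<le> 0" by (simp add: algebra_simps)
    moreover have "e * r > 0" using e r by simp
    ultimately show False by linarith
  qed
qed

lemma mink_comb:
  fixes N :: "'a::real_vector \<Rightarrow> real"
  assumes m: "minkowski_norm N" and t: "0 < t" "t < 1"
  shows "N ((1 - t) *\<^sub>R x + t *\<^sub>R y) \<le> (1 - t) * N x + t * N y"
proof -
  have "N ((1 - t) *\<^sub>R x + t *\<^sub>R y) \<le> N ((1 - t) *\<^sub>R x) + N (t *\<^sub>R y)"
    using m unfolding minkowski_norm_def by blast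
  also have "\<dots> = (1 - t) * N x + t * N y" using m t unfolding minkowski_norm_def by simp
  finally show ?thesis .
qed

lemma fwd_convex:
  fixes N :: "'a::{real_vector,topological_space} \<Rightarrow> real"
  assumes tv: "tvs TYPE('a)" and a: "\<alpha> > 1" and sc: "strictly_sub_convex UNIV N" and m: "minkowski_norm N"
  shows "strict_convex_fun_on UNIV (\<lambda>x. N x powr \<alpha>)"
  unfolding strict_convex_fun_on_def
proof (intro ballI impI allI)
  fix x y :: 'a and t :: real
  assume xy: "x \<noteq> y" and t: "0 < t \<and> t < 1"
  have nn: "\<forall>x. 0 \<le> N x" and h: "\<forall>x. \<forall>c>0. N (c *\<^sub>R x) = c * N x"
    and pd: "\<forall>x. x \<noteq> 0 \<longrightarrow> N x \<noteq> 0" using m unfolding minkowski_norm_def by auto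
  define z where "z = (1 - t) *\<^sub>R x + t *\<^sub>R y"
  have le: "N z \<le> (1 - t) * N x + t * N y" unfolding z_def using mink_comb[OF m] t by auto
  show "N z powr \<alpha> < (1 - t) * N x powr \<alpha> + t * N y powr \<alpha>"
  proof (cases "N x = N y")
    case True
    define r where "r = N x"
    have rpos: "r > 0"
    proof (rule ccontr)
      assume "\<not> r > 0"
      then have "N x = 0" "N y = 0" using nn True unfolding r_def by (auto simp: order.order_iff_strict)
      then show False using pd xy by metis
    qed
    have xS: "x \<in> rel_closure (sublevel UNIV N r)" "y \<in> rel_closure (sublevel UNIV N r)"
      using rel_closure_sup[of "sublevel UNIV N r"] True by (auto simp: sublevel_def r_def)
    have "z \<in> open_segment x y" using xy t unfolding z_def by (auto simp: in_segment)
    then have "z \<in> rel_interior (sublevel UNIV N r)"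
      using sc xS xy unfolding strictly_sub_convex_def strictly_convex_set_def by blast
    then have "N z < r" by (rule interior_lt[OF tv nn h rpos])
    then have "N z powr \<alpha> < r powr \<alpha>" using a nn by (intro powr_less_mono2) auto
    also have "r powr \<alpha> = (1 - t) * N x powr \<alpha> + t * N y powr \<alpha>" using True r_def by (simp add: algebra_simps)
    finally show ?thesis .
  next
    case False
    have "N z powr \<alpha> \<le> ((1 - t) * N x + t * N y) powr \<alpha>"
      using le nn a by (intro powr_mono2) auto
    also have "\<dots> < (1 - t) * N x powr \<alpha> + t * N y powr \<alpha>"
      using powr_strict_convex[of "N x" "N y" t \<alpha>] nn False t a by auto
    finally show ?thesis .
  qed
qed


lemma fwd_cont:
  fixes N :: "'a::{real_vector,topological_space} \<Rightarrow> real"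
  assumes tv: "tvs TYPE('a)" and sc: "strictly_sub_convex UNIV N" and m: "minkowski_norm N"
  shows "continuous_on UNIV N"
proof -
  have nn: "\<forall>x. 0 \<le> N x" and h: "\<forall>x. \<forall>c>0. N (c *\<^sub>R x) = c * N x"
    and sa: "\<forall>x y. N (x + y) \<le> N x + N y"
    and pd: "\<forall>x. x \<noteq> 0 \<longrightarrow> N x \<noteq> 0" using m unfolding minkowski_norm_def by auto
  have N0: "N 0 = 0" using homog_zero[OF h] .
  show ?thesis
  proof (cases "\<exists>w::'a. w \<noteq> 0")
    case False
    then have "\<And>q::'a. q = 0" by blast
    then have "N = (\<lambda>_. N 0)" by (intro ext) metis
    then show ?thesis by (metis continuous_on_const)
  next
    case True
    then obtain w :: 'a where w: "w \<noteq> 0" by blast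
    have Nw: "N w > 0" using nn[rule_format, of w] pd w by (simp add: order.order_iff_strict)
    define u where "u = (1 / N w) *\<^sub>R w"
    have u0: "u \<noteq> 0" using w Nw unfolding u_def by simp
    have Nu: "N u = 1" using h Nw unfolding u_def by simp
    define mm where "mm = N (- u)"
    have "- u \<noteq> 0" using u0 by simp
    then have mm: "mm > 0" using nn[rule_format, of "-u"] pd unfolding mm_def by (simp add: order.order_iff_strict)
    define v where "v = (1 / mm) *\<^sub>R (- u)"
    have Nv: "N v = 1" using h[rule_format, of "1/mm" "-u"] mm unfolding v_def mm_def by simp
    have uv: "u \<noteq> v"
    proof
      assume "u = v"
      then have e1: "u = (1/mm) *\<^sub>R (- u)" unfolding v_def .
      have "u + (1/mm) *\<^sub>R u = (1/mm) *\<^sub>R (- u) + (1/mm) *\<^sub>R u" by (subst e1) (rule refl)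
      also have "\<dots> = 0" by (simp add: scaleR_minus_right)
      finally have "u + (1/mm) *\<^sub>R u = 0" .
      then have "(1 + 1/mm) *\<^sub>R u = 0" by (simp add: algebra_simps)
      moreover have "1 + 1/mm > 0" using mm by (simp add: add_pos_pos)
      ultimately show False using u0 by simp
    qed
    define t where "t = mm / (1 + mm)"
    have t: "0 < t" "t < 1" using mm unfolding t_def by auto
    have "(1 - t) *\<^sub>R u + t *\<^sub>R v = (1/(1+mm) - (mm/(1+mm)) * (1/mm)) *\<^sub>R u"
      unfolding v_def t_def using mm by (simp add: algebra_simps field_simps)
    also have "\<dots> = 0" using mm by (simp add: field_simps)
    finally have "0 \<in> open_segment u v" using uv t by (auto simp: in_segment intro!: exI[of _ t])
    moreover have "u \<in> rel_closure (sublevel UNIV N 1)" "v \<in> rel_closure (sublevel UNIV N 1)"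
      using rel_closure_sup[of "sublevel UNIV N 1"] Nu Nv by (auto simp: sublevel_def)
    ultimately have "0 \<in> rel_interior (sublevel UNIV N 1)"
      using sc uv unfolding strictly_sub_convex_def strictly_convex_set_def by blast
    then obtain U where U: "open U" "0 \<in> U" "U \<subseteq> sublevel UNIV N 1"
      unfolding rel_interior using aff_hull_sub[OF nn h, of 1] by auto
    define W where "W = U \<inter> (\<lambda>x. (-1::real) *\<^sub>R x) -` U"
    have W: "open W" "0 \<in> W" unfolding W_def using U open_vimage[OF U(1) tvs_scale[OF tv]] by auto
    have Wb: "N x \<le> 1 \<and> N (- x) \<le> 1" if "x \<in> W" for x
      using that U(3) unfolding W_def sublevel_def by auto
    show ?thesis unfolding continuous_on_topological
    proof (intro ballI allI impI)
      fix p :: 'a and B :: "real set"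
      assume "open B" "N p \<in> B"
      then obtain e where e: "e > 0" "ball (N p) e \<subseteq> B" using openE by blast
      define f where "f = (\<lambda>x. (2/e) *\<^sub>R x) \<circ> (\<lambda>x. x + (- p))"
      have fc: "continuous_on UNIV f" unfolding f_def
        by (rule continuous_on_compose[OF tvs_add[OF tv]], rule continuous_on_subset[OF tvs_scale[OF tv]], simp)
      have A: "open (f -` W)" by (rule open_vimage[OF W(1) fc])
      have pA: "p \<in> f -` W" using W(2) unfolding f_def by simp
      have "N q \<in> B" if q: "q \<in> f -` W" for q
      proof -
        define k where "k = q - p"
        have "(2/e) *\<^sub>R k \<in> W" using q unfolding f_def k_def by simp
        then have b: "N ((2/e) *\<^sub>R k) \<le> 1" "N (- ((2/e) *\<^sub>R k)) \<le> 1" using Wb by auto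
        have "N ((2/e) *\<^sub>R k) = (2/e) * N k" using h e by simp
        moreover have "N (- ((2/e) *\<^sub>R k)) = (2/e) * N (- k)" using h e
          by (metis scaleR_minus_right zero_less_divide_iff zero_less_numeral)
        ultimately have "(2/e) * N k \<le> 1" "(2/e) * N (-k) \<le> 1" using b by simp_all
        then have "e * ((2/e) * N k) \<le> e" "e * ((2/e) * N (-k)) \<le> e" using e
          by (metis mult.right_neutral mult_left_mono less_imp_le)+
        then have k1: "N k \<le> e/2" "N (-k) \<le> e/2" using e by simp_all
        have "N q \<le> N p + N k" using sa[rule_format, of p k] unfolding k_def by simp
        moreover have "N p \<le> N q + N (-k)" using sa[rule_format, of q "-k"] unfolding k_def by simp
        ultimately have "\<bar>N q - N p\<bar> < e" using k1 e by linarith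
        then show ?thesis using e(2) by (auto simp: dist_real_def)
      qed
      then show "\<exists>A. open A \<and> p \<in> A \<and> (\<forall>y\<in>UNIV. y \<in> A \<longrightarrow> N y \<in> B)"
        using A pA by blast
    qed
  qed
qed


lemma bwd:
  fixes N :: "'a::{real_vector,topological_space} \<Rightarrow> real"
  assumes a: "\<alpha> > 1" and nn: "\<forall>x. 0 \<le> N x" and h: "\<forall>x. \<forall>c>0. N (c *\<^sub>R x) = c * N x"
    and cont: "continuous_on UNIV N" and scf: "strict_convex_fun_on UNIV (\<lambda>x. N x powr \<alpha>)"
  shows "strictly_sub_convex UNIV N \<and> minkowski_norm N"
proof -
  have N0: "N 0 = 0" using homog_zero[OF h] .
  have sc: "N ((1 - t) *\<^sub>R x + t *\<^sub>R y) powr \<alpha> < (1 - t) * N x powr \<alpha> + t * N y powr \<alpha>"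
    if "x \<noteq> y" "0 < t" "t < 1" for x y t
    using scf that unfolding strict_convex_fun_on_def by blast
  have cv: "N ((1 - t) *\<^sub>R x + t *\<^sub>R y) powr \<alpha> \<le> (1 - t) * N x powr \<alpha> + t * N y powr \<alpha>"
    if "0 < t" "t < 1" for x y t
  proof (cases "x = y")
    case True then show ?thesis by (simp add: algebra_simps)
  qed (use sc that in \<open>auto intro: less_imp_le\<close>)
  have pd: "N x \<noteq> 0" if "x \<noteq> 0" for x
  proof
    assume Nx: "N x = 0"
    have "N ((1 - 1/2) *\<^sub>R x + (1/2) *\<^sub>R 0) powr \<alpha> < (1 - 1/2) * N x powr \<alpha> + (1/2) * N 0 powr \<alpha>"
      by (rule sc) (use that in auto)
    moreover have "N ((1 - 1/2) *\<^sub>R x + (1/2) *\<^sub>R 0) = 0" using h Nx by simp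
    ultimately show False using Nx N0 by simp
  qed
  have pow_le1: "N w \<le> 1" if "N w powr \<alpha> \<le> 1" for w
  proof (rule ccontr)
    assume "\<not> N w \<le> 1"
    then have "1 powr \<alpha> < N w powr \<alpha>" using a by (intro powr_less_mono2) auto
    then show False using that by simp
  qed
  have sa: "N (x + y) \<le> N x + N y" for x y
  proof (cases "x = 0 \<or> y = 0")
    case True then show ?thesis using N0 by auto
  next
    case False
    then have A: "N x > 0" "N y > 0" using pd nn by (auto simp: order.order_iff_strict)
    define s where "s = N x + N y"
    define t where "t = N y / s"
    have s: "s > 0" and t: "0 < t" "t < 1" using A unfolding s_def t_def by auto
    have omt: "1 - t = N x / s" using s unfolding t_def s_def by (simp add: field_simps)
    define w where "w = (1 - t) *\<^sub>R ((1 / N x) *\<^sub>R x) + t *\<^sub>R ((1 / N y) *\<^sub>R y)"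
    have "N ((1 / N x) *\<^sub>R x) = 1" "N ((1 / N y) *\<^sub>R y) = 1" using h A by simp_all
    then have "N w powr \<alpha> \<le> 1" using cv[OF t, of "(1 / N x) *\<^sub>R x" "(1 / N y) *\<^sub>R y"]
      unfolding w_def by simp
    then have w1: "N w \<le> 1" by (rule pow_le1)
    have c1: "(1 - t) * (1 / N x) = 1 / s" using A s unfolding omt by simp
    have c2: "t * (1 / N y) = 1 / s" using A s unfolding t_def by simp
    have "w = ((1 - t) * (1 / N x)) *\<^sub>R x + (t * (1 / N y)) *\<^sub>R y" unfolding w_def by simp
    also have "\<dots> = (1/s) *\<^sub>R (x + y)" unfolding c1 c2 by (simp add: scaleR_add_right)
    finally have "w = (1/s) *\<^sub>R (x + y)" .
    then have "x + y = s *\<^sub>R w" using s by simp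
    then have "N (x + y) = s * N w" using h s by simp
    also have "\<dots> \<le> s" using w1 s by (simp add: mult_left_le)
    finally show ?thesis unfolding s_def .
  qed
  have mk: "minkowski_norm N" unfolding minkowski_norm_def using nn h sa pd by blast
  have ssc: "strictly_convex_set (sublevel UNIV N r)" for r
  proof (cases "r > 0")
    case False
    have sub: "sublevel UNIV N r \<subseteq> {0}"
    proof
      fix x assume "x \<in> sublevel UNIV N r"
      then have "N x \<le> r" by (simp add: sublevel_def)
      then have "N x = 0" using False nn[rule_format, of x] by linarith
      then show "x \<in> {0}" using pd by blast
    qed
    have "rel_closure (sublevel UNIV N r) \<subseteq> {0}"
      using rel_closure_sub[of "sublevel UNIV N r"] hull_mono[OF sub, of affine] hull_same[of affine "{0::'a}", OF affine_sing] by blast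
    then show ?thesis unfolding strictly_convex_set_def by auto
  next
    case True
    have aff: "affine hull (sublevel UNIV N r) = UNIV" by (rule aff_hull_sub[OF nn h True])
    have cl: "closed (sublevel UNIV N r)"
      unfolding sublevel_def using closed_vimage[OF closed_atMost cont] by (simp add: vimage_def)
    have rc: "rel_closure (sublevel UNIV N r) = sublevel UNIV N r"
      unfolding rel_closure_def aff using cl by (simp add: closure_closed)
    have op: "open {x. N x < r}"
      using open_vimage[OF open_lessThan cont] by (simp add: vimage_def)
    have ri: "{x. N x < r} \<subseteq> rel_interior (sublevel UNIV N r)"
      unfolding rel_interior aff using op by (auto simp: sublevel_def)
    show ?thesis unfolding strictly_convex_set_def rc
    proof (intro ballI impI subsetI)
      fix x y z assume x: "x \<in> sublevel UNIV N r" and y: "y \<in> sublevel UNIV N r" and xy: "x \<noteq> y"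
        and z: "z \<in> open_segment x y"
      then obtain t where t: "0 < t" "t < 1" and zt: "z = (1 - t) *\<^sub>R x + t *\<^sub>R y" by (auto simp: in_segment)
      have "N z powr \<alpha> < (1 - t) * N x powr \<alpha> + t * N y powr \<alpha>" using sc[OF xy t] zt by simp
      also have "\<dots> \<le> (1 - t) * r powr \<alpha> + t * r powr \<alpha>"
        using x y t nn a by (intro add_mono mult_left_mono powr_mono2) (auto simp: sublevel_def)
      also have "\<dots> = r powr \<alpha>" by (simp add: algebra_simps)
      finally have "N z < r"
        using powr_mono2[of \<alpha> r "N z"] a True by (smt (verit))
      then show "z \<in> rel_interior (sublevel UNIV N r)" using ri by auto
    qed
  qed
  show ?thesis using mk ssc unfolding strictly_sub_convex_def by blast
qed

theorem mainTheorem2: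
  fixes N :: "'a::{real_vector,topological_space} \<Rightarrow> real" and \<alpha> :: real
  assumes "tvs TYPE('a)" and "\<alpha> > 1"
  shows "(strictly_sub_convex UNIV N \<and> minkowski_norm N) \<longleftrightarrow>
         ((\<forall>x. 0 \<le> N x) \<and> (\<forall>x. \<forall>c>0. N (c *\<^sub>R x) = c * N x) \<and>
          continuous_on UNIV N \<and> strict_convex_fun_on UNIV (\<lambda>x. N x powr \<alpha>))"
proof
  assume L: "strictly_sub_convex UNIV N \<and> minkowski_norm N"
  then show "(\<forall>x. 0 \<le> N x) \<and> (\<forall>x. \<forall>c>0. N (c *\<^sub>R x) = c * N x) \<and>
          continuous_on UNIV N \<and> strict_convex_fun_on UNIV (\<lambda>x. N x powr \<alpha>)"
  proof -
    have m: "minkowski_norm N" and sc: "strictly_sub_convex UNIV N" using L by auto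
    have "(\<forall>x. 0 \<le> N x) \<and> (\<forall>x. \<forall>c>0. N (c *\<^sub>R x) = c * N x)"
      using m unfolding minkowski_norm_def by auto
    moreover have "continuous_on UNIV N" by (rule fwd_cont[OF assms(1) sc m])
    moreover have "strict_convex_fun_on UNIV (\<lambda>x. N x powr \<alpha>)" by (rule fwd_convex[OF assms sc m])
    ultimately show ?thesis by blast
  qed
next
  assume "(\<forall>x. 0 \<le> N x) \<and> (\<forall>x. \<forall>c>0. N (c *\<^sub>R x) = c * N x) \<and>
          continuous_on UNIV N \<and> strict_convex_fun_on UNIV (\<lambda>x. N x powr \<alpha>)"
  then show "strictly_sub_convex UNIV N \<and> minkowski_norm N"
    using bwd[OF assms(2)] by auto
qed

end
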